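(* Let $G$ be a group and $S\subseteq G$ a conjugation invariant generating set of $G$. Suppose there exist homogeneous quasi-morphisms $q_1,\dots,q_m:G\to\mathbb{R}$ which are linearly independent (as elements of the real vector space of functions $G\to\mathbb R$) and each of which is bounded on $S$. Then there is a quasi-isometric embedding of $\mathbb{Z}^m$ into $\mathrm{Cay}(G,S)$.
   Context: A quasi-morphism is a function $q:G\to\mathbb{R}$ with $\sup_{g,h\in G}|q(gh)-q(g)-q(h)|<\infty$ (this supremum is the defect); it is homogeneous if $q(g^k)=kq(g)$ for all $g\in G$, $k\in\mathbb{Z}$. $S$ is conjugation invariant if $gsg^{-1}\in S$ for all $g\in G$, $s\in S$. $\mathrm{Cay}(G,S)$ is the graph with vertex set $G$ and an (undirected) edge between $g$ and $sg$ for every $g\in G$, $s\in S$, with the path metric in which edges have length $1$. $\mathbb{Z}^m$ carries the $\ell^1$ metric. A map $f$ between metric spaces is a quasi-isometric embedding if there are $K\ge1,C\ge0$ with $\frac1K d(x,y)-C\le d(f(x),f(y))\le Kd(x,y)+C$. *)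

theory Defs
  imports "HOL-Algebra.Algebra"
begin

definition quasi_morphism :: "('a, 'b) monoid_scheme \<Rightarrow> ('a \<Rightarrow> real) \<Rightarrow> bool" where
  "quasi_morphism G q \<longleftrightarrow>
     (\<exists>D. \<forall>g\<in>carrier G. \<forall>h\<in>carrier G. \<bar>q (g \<otimes>\<^bsub>G\<^esub> h) - q g - q h\<bar> \<le> D)"

definition homogeneous :: "('a, 'b) monoid_scheme \<Rightarrow> ('a \<Rightarrow> real) \<Rightarrow> bool" where
  "homogeneous G q \<longleftrightarrow> (\<forall>g\<in>carrier G. \<forall>k::int. q (g [^]\<^bsub>G\<^esub> k) = of_int k * q g)"

definition conj_invariant :: "('a, 'b) monoid_scheme \<Rightarrow> 'a set \<Rightarrow> bool" where
  "conj_invariant G S \<longleftrightarrow>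
     (\<forall>g\<in>carrier G. \<forall>s\<in>S. g \<otimes>\<^bsub>G\<^esub> s \<otimes>\<^bsub>G\<^esub> inv\<^bsub>G\<^esub> g \<in> S)"

definition lin_indep_on :: "('a, 'b) monoid_scheme \<Rightarrow> nat \<Rightarrow> (nat \<Rightarrow> 'a \<Rightarrow> real) \<Rightarrow> bool" where
  "lin_indep_on G m q \<longleftrightarrow>
     (\<forall>c::nat \<Rightarrow> real. (\<forall>g\<in>carrier G. (\<Sum>i<m. c i * q i g) = 0) \<longrightarrow> (\<forall>i<m. c i = 0))"

text \<open>Path metric of Cay(G,S): edges g -- s g for s in S; a path step multiplies on the
  left by an element of S or its inverse.\<close>
definition cay_dist :: "('a, 'b) monoid_scheme \<Rightarrow> 'a set \<Rightarrow> 'a \<Rightarrow> 'a \<Rightarrow> nat" where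
  "cay_dist G S g h = (LEAST n. \<exists>xs. length xs = n \<and>
      set xs \<subseteq> S \<union> (\<lambda>s. inv\<^bsub>G\<^esub> s) ` S \<and> h = foldr (\<lambda>x y. x \<otimes>\<^bsub>G\<^esub> y) xs g)"

text \<open>Z^m realised as integer functions on nat supported in {..<m}, with the l^1 metric.\<close>
definition Zm :: "nat \<Rightarrow> (nat \<Rightarrow> int) set" where
  "Zm m = {x. \<forall>i\<ge>m. x i = 0}"

definition l1_dist :: "nat \<Rightarrow> (nat \<Rightarrow> int) \<Rightarrow> (nat \<Rightarrow> int) \<Rightarrow> real" where
  "l1_dist m x y = (\<Sum>i<m. real_of_int \<bar>x i - y i\<bar>)"

definition qi_embedding_Zm_Cay ::
    "nat \<Rightarrow> ('a, 'b) monoid_scheme \<Rightarrow> 'a set \<Rightarrow> ((nat \<Rightarrow> int) \<Rightarrow> 'a) \<Rightarrow> bool" where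
  "qi_embedding_Zm_Cay m G S f \<longleftrightarrow>
     (\<forall>x\<in>Zm m. f x \<in> carrier G) \<and>
     (\<exists>K C. K \<ge> 1 \<and> C \<ge> 0 \<and> (\<forall>x\<in>Zm m. \<forall>y\<in>Zm m.
        l1_dist m x y / K - C \<le> real (cay_dist G S (f x) (f y)) \<and>
        real (cay_dist G S (f x) (f y)) \<le> K * l1_dist m x y + C))"

end

theory Submission
  imports Defs
begin


locale cay = group G for G (structure) +
  fixes S :: "'a set"
  assumes S_sub: "S \<subseteq> carrier G"
    and conj_inv: "conj_invariant G S"
    and gen: "generate G S = carrier G"
begin

definition Wd :: "'a \<Rightarrow> nat \<Rightarrow> bool" where
  "Wd a n \<longleftrightarrow> (\<exists>xs. length xs = n \<and> set xs \<subseteq> S \<union> (\<lambda>s. inv s) ` S \<and> a = foldr (\<lambda>x y. x \<otimes> y) xs \<one>)"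

lemma inv_cancel_l [simp]: "x \<in> carrier G \<Longrightarrow> y \<in> carrier G \<Longrightarrow> inv x \<otimes> (x \<otimes> y) = y"
  by (simp add: m_assoc[symmetric])

lemma T_carrier: "S \<union> (\<lambda>s. inv s) ` S \<subseteq> carrier G"
  using S_sub by auto

lemma foldr_carrier: "set xs \<subseteq> carrier G \<Longrightarrow> foldr (\<lambda>x y. x \<otimes> y) xs \<one> \<in> carrier G"
  by (induction xs) auto

lemma foldr_mult: "set xs \<subseteq> carrier G \<Longrightarrow> g \<in> carrier G \<Longrightarrow>
    foldr (\<lambda>x y. x \<otimes> y) xs g = foldr (\<lambda>x y. x \<otimes> y) xs \<one> \<otimes> g"
  by (induction xs) (auto simp: m_assoc foldr_carrier)

lemma Wd_carrier: "Wd a n \<Longrightarrow> a \<in> carrier G"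
  unfolding Wd_def using T_carrier foldr_carrier by blast

lemma Wd_one: "Wd \<one> 0"
  unfolding Wd_def by auto

lemma Wd_single: "x \<in> S \<union> (\<lambda>s. inv s) ` S \<Longrightarrow> Wd x 1"
  unfolding Wd_def using T_carrier
  by (intro exI[of _ "[x]"]) auto

lemma Wd_mult: assumes "Wd a n" "Wd b l" shows "Wd (a \<otimes> b) (n + l)"
proof -
  obtain xs where xs: "length xs = n" "set xs \<subseteq> S \<union> (\<lambda>s. inv s) ` S" "a = foldr (\<lambda>x y. x \<otimes> y) xs \<one>"
    using assms(1) unfolding Wd_def by blast
  obtain ys where ys: "length ys = l" "set ys \<subseteq> S \<union> (\<lambda>s. inv s) ` S" "b = foldr (\<lambda>x y. x \<otimes> y) ys \<one>"
    using assms(2) unfolding Wd_def by blast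
  have c1: "set xs \<subseteq> carrier G" "set ys \<subseteq> carrier G" using xs ys T_carrier by auto
  have "foldr (\<lambda>x y. x \<otimes> y) (xs @ ys) \<one> = a \<otimes> b"
    using foldr_mult[OF c1(1) foldr_carrier[OF c1(2)]] xs ys by simp
  then show ?thesis unfolding Wd_def using xs ys
    by (intro exI[of _ "xs @ ys"]) auto
qed

lemma T_inv: "x \<in> S \<union> (\<lambda>s. inv s) ` S \<Longrightarrow> inv x \<in> S \<union> (\<lambda>s. inv s) ` S"
  using S_sub by auto

lemma Wd_inv_list: "set xs \<subseteq> S \<union> (\<lambda>s. inv s) ` S \<Longrightarrow> Wd (inv (foldr (\<lambda>x y. x \<otimes> y) xs \<one>)) (length xs)"
proof (induction xs)
  case Nil then show ?case using Wd_one by simp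
next
  case (Cons x xs)
  have x: "x \<in> carrier G" and r: "foldr (\<lambda>x y. x \<otimes> y) xs \<one> \<in> carrier G"
    using Cons.prems T_carrier foldr_carrier by auto
  have "Wd (inv (foldr (\<lambda>x y. x \<otimes> y) xs \<one>) \<otimes> inv x) (length xs + 1)"
    using Cons.prems by (intro Wd_mult Cons.IH Wd_single T_inv) auto
  then show ?case using x r by (simp add: inv_mult_group)
qed

lemma Wd_inv: "Wd a n \<Longrightarrow> Wd (inv a) n"
  unfolding Wd_def[of a] using Wd_inv_list by blast

lemma Wd_pow_nat: "Wd a n \<Longrightarrow> Wd (a [^] (k::nat)) (k * n)"
proof (induction k)
  case 0 then show ?case using Wd_one by simp
next
  case (Suc k)
  then show ?case using Wd_mult[of "a [^] k" "k*n" a n] by (simp add: add.commute)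
qed

lemma Wd_pow_int: assumes "Wd a n" shows "Wd (a [^] (k::int)) (nat \<bar>k\<bar> * n)"
proof (cases "k < 0")
  case True
  then have "a [^] k = inv (a [^] (nat (-k)))" by (simp only: int_pow_def2 if_True)
  moreover have "nat \<bar>k\<bar> = nat (-k)" using True by simp
  ultimately show ?thesis using Wd_inv[OF Wd_pow_nat[OF assms, of "nat (-k)"]] by simp
next
  case False
  then have "a [^] k = a [^] (nat k)" by (simp only: int_pow_def2 if_False)
  moreover have "nat \<bar>k\<bar> = nat k" using False by simp
  ultimately show ?thesis using Wd_pow_nat[OF assms, of "nat k"] by simp
qed

lemma T_conj: assumes "u \<in> carrier G" "x \<in> S \<union> (\<lambda>s. inv s) ` S"
  shows "u \<otimes> x \<otimes> inv u \<in> S \<union> (\<lambda>s. inv s) ` S"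
proof (cases "x \<in> S")
  case True then show ?thesis using conj_inv assms unfolding conj_invariant_def by auto
next
  case False
  then obtain s where s: "s \<in> S" "x = inv s" using assms by auto
  have sc: "s \<in> carrier G" using s S_sub by auto
  have "u \<otimes> s \<otimes> inv u \<in> S" using conj_inv assms s unfolding conj_invariant_def by auto
  moreover have "inv (u \<otimes> s \<otimes> inv u) = u \<otimes> x \<otimes> inv u"
    using s sc assms(1) by (simp add: inv_mult_group m_assoc)
  ultimately show ?thesis by force
qed

lemma Wd_conj_list: "u \<in> carrier G \<Longrightarrow> set xs \<subseteq> S \<union> (\<lambda>s. inv s) ` S \<Longrightarrow>
   Wd (u \<otimes> foldr (\<lambda>x y. x \<otimes> y) xs \<one> \<otimes> inv u) (length xs)"
proof (induction xs)
  case Nil then show ?case using Wd_one by simp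
next
  case (Cons x xs)
  have x: "x \<in> carrier G" and r: "foldr (\<lambda>x y. x \<otimes> y) xs \<one> \<in> carrier G"
    using Cons.prems T_carrier foldr_carrier by auto
  have "Wd ((u \<otimes> x \<otimes> inv u) \<otimes> (u \<otimes> foldr (\<lambda>x y. x \<otimes> y) xs \<one> \<otimes> inv u)) (1 + length xs)"
    using Cons.prems by (intro Wd_mult Cons.IH Wd_single T_conj) auto
  moreover have "(u \<otimes> x \<otimes> inv u) \<otimes> (u \<otimes> foldr (\<lambda>x y. x \<otimes> y) xs \<one> \<otimes> inv u)
      = u \<otimes> (x \<otimes> foldr (\<lambda>x y. x \<otimes> y) xs \<one>) \<otimes> inv u"
    using x r Cons.prems(1) by (simp add: m_assoc)
  ultimately show ?case by simp
qed

lemma Wd_conj: "u \<in> carrier G \<Longrightarrow> Wd c l \<Longrightarrow> Wd (u \<otimes> c \<otimes> inv u) l"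
  unfolding Wd_def[of c] using Wd_conj_list by blast

lemma Wd_mid: assumes "Wd c l" "Wd (u \<otimes> v) n" "u \<in> carrier G" "v \<in> carrier G"
  shows "Wd (u \<otimes> c \<otimes> v) (l + n)"
proof -
  have c: "c \<in> carrier G" using assms Wd_carrier by auto
  have "u \<otimes> c \<otimes> v = (u \<otimes> c \<otimes> inv u) \<otimes> (u \<otimes> v)"
  proof -
    have "inv u \<otimes> (u \<otimes> v) = v" using assms by (simp add: m_assoc[symmetric])
    then show ?thesis using assms c by (simp add: m_assoc)
  qed
  then show ?thesis using Wd_mult[OF Wd_conj[OF assms(3,1)] assms(2)] by simp
qed

lemma Wd_gen: "a \<in> carrier G \<Longrightarrow> \<exists>n. Wd a n"
proof -
  assume "a \<in> carrier G"
  then have "a \<in> generate G S" using gen by simp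
  then show ?thesis
  proof (induction rule: generate.induct)
    case one then show ?case using Wd_one by blast
  next
    case (incl h) then show ?case using Wd_single by blast
  next
    case (inv h) then show ?case using Wd_single by blast
  next
    case (eng h1 h2) then show ?case using Wd_mult by blast
  qed
qed

lemma cay_dist_le: assumes "g \<in> carrier G" "h \<in> carrier G" "Wd (h \<otimes> inv g) n"
  shows "cay_dist G S g h \<le> n"
proof -
  obtain xs where xs: "length xs = n" "set xs \<subseteq> S \<union> (\<lambda>s. inv s) ` S" "h \<otimes> inv g = foldr (\<lambda>x y. x \<otimes> y) xs \<one>"
    using assms(3) unfolding Wd_def by blast
  have "foldr (\<lambda>x y. x \<otimes> y) xs g = h \<otimes> inv g \<otimes> g"
    using foldr_mult[of xs g] xs T_carrier assms by auto
  also have "\<dots> = h" using assms by (simp add: m_assoc)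
  finally show ?thesis unfolding cay_dist_def using xs
    by (intro Least_le) auto
qed

lemma cay_dist_Wd: assumes "g \<in> carrier G" "h \<in> carrier G"
  shows "Wd (h \<otimes> inv g) (cay_dist G S g h)"
proof -
  let ?P = "\<lambda>n. \<exists>xs. length xs = n \<and> set xs \<subseteq> S \<union> (\<lambda>s. inv s) ` S \<and> h = foldr (\<lambda>x y. x \<otimes> y) xs g"
  obtain n0 where "Wd (h \<otimes> inv g) n0" using Wd_gen assms by blast
  then obtain xs where xs: "length xs = n0" "set xs \<subseteq> S \<union> (\<lambda>s. inv s) ` S" "h \<otimes> inv g = foldr (\<lambda>x y. x \<otimes> y) xs \<one>"
    unfolding Wd_def by blast
  have "foldr (\<lambda>x y. x \<otimes> y) xs g = h \<otimes> inv g \<otimes> g"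
    using foldr_mult[of xs g] xs T_carrier assms by auto
  also have "\<dots> = h" using assms by (simp add: m_assoc)
  finally have "?P n0" using xs by auto
  then have "?P (LEAST n. ?P n)" by (rule LeastI)
  then obtain ys where ys: "length ys = cay_dist G S g h" "set ys \<subseteq> S \<union> (\<lambda>s. inv s) ` S" "h = foldr (\<lambda>x y. x \<otimes> y) ys g"
    unfolding cay_dist_def by blast
  have "h \<otimes> inv g = foldr (\<lambda>x y. x \<otimes> y) ys \<one> \<otimes> g \<otimes> inv g"
    using ys foldr_mult[of ys g] T_carrier assms by auto
  also have "\<dots> = foldr (\<lambda>x y. x \<otimes> y) ys \<one>"
  proof -
    have "set ys \<subseteq> carrier G" using ys T_carrier by auto
    then show ?thesis using foldr_carrier[of ys] assms by (simp add: m_assoc)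
  qed
  finally show ?thesis unfolding Wd_def using ys by blast
qed

end

fun Pw :: "('a, 'b) monoid_scheme \<Rightarrow> (nat \<Rightarrow> 'a) \<Rightarrow> (nat \<Rightarrow> int) \<Rightarrow> nat \<Rightarrow> 'a" where
  "Pw G g x 0 = \<one>\<^bsub>G\<^esub>"
| "Pw G g x (Suc n) = Pw G g x n \<otimes>\<^bsub>G\<^esub> (g n [^]\<^bsub>G\<^esub> x n)"

context cay
begin

lemma Pw_carrier: "(\<forall>j<n. g j \<in> carrier G) \<Longrightarrow> Pw G g x n \<in> carrier G"
  by (induction n) auto

lemma Wd_F: assumes "\<forall>j<n. g j \<in> carrier G" "\<forall>j<n. Wd (g j) (L j)"
  shows "Wd (Pw G g y n \<otimes> inv (Pw G g x n)) (\<Sum>j<n. nat \<bar>y j - x j\<bar> * L j)"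
  using assms
proof (induction n)
  case 0 then show ?case using Wd_one by simp
next
  case (Suc n)
  let ?u = "Pw G g y n" and ?v = "inv (Pw G g x n)" and ?c = "g n [^] (y n - x n)"
  have u: "?u \<in> carrier G" and v: "?v \<in> carrier G" and gn: "g n \<in> carrier G"
    using Suc.prems Pw_carrier by auto
  have xv: "Pw G g x n \<in> carrier G" using Suc.prems Pw_carrier by auto
  have "Wd (?u \<otimes> ?c \<otimes> ?v) (nat \<bar>y n - x n\<bar> * L n + (\<Sum>j<n. nat \<bar>y j - x j\<bar> * L j))"
    using Suc by (intro Wd_mid Wd_pow_int u v) auto
  moreover have "?u \<otimes> ?c \<otimes> ?v = Pw G g y (Suc n) \<otimes> inv (Pw G g x (Suc n))"
    using u v gn xv by (simp add: int_pow_diff inv_mult_group m_assoc)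
  ultimately show ?case by (simp add: add.commute)
qed

end

locale qm = cay +
  fixes q :: "'a \<Rightarrow> real" and D B :: real
  assumes D0: "D \<ge> 0" and B0: "B \<ge> 0"
    and qd: "\<And>a b. a \<in> carrier G \<Longrightarrow> b \<in> carrier G \<Longrightarrow> \<bar>q (a \<otimes> b) - q a - q b\<bar> \<le> D"
    and hom: "homogeneous G q"
    and bnd: "\<And>s. s \<in> S \<Longrightarrow> \<bar>q s\<bar> \<le> B"
begin

lemma q_pow_int: "a \<in> carrier G \<Longrightarrow> q (a [^] (k::int)) = of_int k * q a"
  using hom unfolding homogeneous_def by blast

lemma q_pow_nat: "a \<in> carrier G \<Longrightarrow> q (a [^] (k::nat)) = real k * q a"
  using q_pow_int[of a "int k"] by (simp add: int_pow_int)

lemma q_inv: "a \<in> carrier G \<Longrightarrow> q (inv a) = - q a"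
  using q_pow_int[of a "-1"] by (simp add: int_pow_neg)

lemma q_T: "x \<in> S \<union> (\<lambda>s. inv s) ` S \<Longrightarrow> \<bar>q x\<bar> \<le> B"
  using bnd q_inv S_sub by auto

lemma q_word: "set xs \<subseteq> S \<union> (\<lambda>s. inv s) ` S \<Longrightarrow>
   \<bar>q (foldr (\<lambda>x y. x \<otimes> y) xs \<one>)\<bar> \<le> real (length xs) * (B + D)"
proof (induction xs)
  case Nil
  have "q \<one> = 0" using q_pow_nat[of \<one> 0] by simp
  then show ?case by simp
next
  case (Cons x xs)
  have x: "x \<in> carrier G" and r: "foldr (\<lambda>x y. x \<otimes> y) xs \<one> \<in> carrier G"
    using Cons.prems T_carrier foldr_carrier by auto
  have "\<bar>q x\<bar> \<le> B" using Cons.prems q_T by auto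
  moreover have "\<bar>q (x \<otimes> foldr (\<lambda>x y. x \<otimes> y) xs \<one>) - q x - q (foldr (\<lambda>x y. x \<otimes> y) xs \<one>)\<bar> \<le> D"
    using qd x r by blast
  moreover have "\<bar>q (foldr (\<lambda>x y. x \<otimes> y) xs \<one>)\<bar> \<le> real (length xs) * (B + D)"
    using Cons by auto
  ultimately show ?case by (simp add: algebra_simps)
qed

lemma q_Wd: "Wd a n \<Longrightarrow> \<bar>q a\<bar> \<le> real n * (B + D)"
  unfolding Wd_def using q_word by blast

lemma conj_pow: "a \<in> carrier G \<Longrightarrow> b \<in> carrier G \<Longrightarrow>
  (a \<otimes> b \<otimes> inv a) [^] (n::nat) = a \<otimes> b [^] n \<otimes> inv a"
  by (induction n) (auto simp: m_assoc)

lemma q_conj: assumes a: "a \<in> carrier G" and b: "b \<in> carrier G"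
  shows "q (a \<otimes> b \<otimes> inv a) = q b"
proof (rule ccontr)
  assume ne: "q (a \<otimes> b \<otimes> inv a) \<noteq> q b"
  define d where "d = \<bar>q (a \<otimes> b \<otimes> inv a) - q b\<bar>"
  have d0: "d > 0" using ne d_def by auto
  obtain n :: nat where n: "real n > 2 * D / d" using reals_Archimedean2 by blast
  have bn: "b [^] n \<in> carrier G" using b by simp
  have "q ((a \<otimes> b \<otimes> inv a) [^] n) = real n * q (a \<otimes> b \<otimes> inv a)"
    using a b by (intro q_pow_nat) auto
  then have e1: "q (a \<otimes> b [^] n \<otimes> inv a) = real n * q (a \<otimes> b \<otimes> inv a)"
    using conj_pow a b by simp
  have e2: "\<bar>q (a \<otimes> b [^] n \<otimes> inv a) - q (a \<otimes> b [^] n) - q (inv a)\<bar> \<le> D"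
    using qd a bn by simp
  have e3: "\<bar>q (a \<otimes> b [^] n) - q a - q (b [^] n)\<bar> \<le> D"
    using qd a bn by simp
  have e4: "q (inv a) = - q a" using q_inv a by simp
  have e5: "q (b [^] n) = real n * q b" using q_pow_nat b by simp
  have "\<bar>real n * (q (a \<otimes> b \<otimes> inv a) - q b)\<bar> \<le> 2 * D"
    using e1 e2 e3 e4 e5 by (simp add: algebra_simps)
  then have "real n * d \<le> 2 * D" unfolding d_def by (simp add: abs_mult)
  moreover have "real n * d > 2 * D" using n d0 by (simp add: field_simps)
  ultimately show False by simp
qed

lemma q_mid: assumes "u \<in> carrier G" "c \<in> carrier G" "v \<in> carrier G"
  shows "\<bar>q (u \<otimes> c \<otimes> v) - q c - q (u \<otimes> v)\<bar> \<le> D"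
proof -
  have "u \<otimes> c \<otimes> v = u \<otimes> (c \<otimes> (v \<otimes> u)) \<otimes> inv u" using assms by (simp add: m_assoc)
  then have 1: "q (u \<otimes> c \<otimes> v) = q (c \<otimes> (v \<otimes> u))" using q_conj assms by simp
  have "u \<otimes> v = u \<otimes> (v \<otimes> u) \<otimes> inv u" using assms by (simp add: m_assoc)
  then have 2: "q (u \<otimes> v) = q (v \<otimes> u)" using q_conj assms by simp
  show ?thesis using 1 2 qd assms by simp
qed

lemma q_F: assumes "\<forall>j<n. g j \<in> carrier G"
  shows "\<bar>q (Pw G g y n \<otimes> inv (Pw G g x n)) - (\<Sum>j<n. of_int (y j - x j) * q (g j))\<bar> \<le> real n * D"
  using assms
proof (induction n)
  case 0
  have "q \<one> = 0" using q_pow_nat[of \<one> 0] by simp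
  then show ?case by simp
next
  case (Suc n)
  let ?u = "Pw G g y n" and ?v = "inv (Pw G g x n)" and ?c = "g n [^] (y n - x n)"
  have u: "?u \<in> carrier G" and v: "?v \<in> carrier G" and gn: "g n \<in> carrier G"
    using Suc.prems Pw_carrier by auto
  have xv: "Pw G g x n \<in> carrier G" using Suc.prems Pw_carrier by auto
  have c: "?c \<in> carrier G" using gn by simp
  have "?u \<otimes> ?c \<otimes> ?v = Pw G g y (Suc n) \<otimes> inv (Pw G g x (Suc n))"
    using u v gn xv by (simp add: int_pow_diff inv_mult_group m_assoc)
  moreover have "\<bar>q (?u \<otimes> ?c \<otimes> ?v) - q ?c - q (?u \<otimes> ?v)\<bar> \<le> D"
    using q_mid u v c by blast
  moreover have "q ?c = of_int (y n - x n) * q (g n)" using q_pow_int gn by blast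
  moreover have "\<bar>q (?u \<otimes> ?v) - (\<Sum>j<n. of_int (y j - x j) * q (g j))\<bar> \<le> real n * D"
    using Suc by auto
  ultimately show ?case by (simp add: algebra_simps)
qed

end

definition spn :: "'a set \<Rightarrow> (nat \<Rightarrow> 'a \<Rightarrow> real) \<Rightarrow> nat \<Rightarrow> ('a \<Rightarrow> real) \<Rightarrow> bool" where
  "spn A q n p \<longleftrightarrow> (\<exists>c. \<forall>h\<in>A. p h = (\<Sum>i<n. c i * q i h))"

lemma spn_q: assumes "i < n" shows "spn A q n (q i)"
proof -
  have X: "\<forall>h\<in>A. q i h = (\<Sum>j<n. (if j = i then 1 else 0) * q j h)"
  proof
    fix h
    have "(\<Sum>j<n. (if j = i then 1 else 0) * q j h) = (\<Sum>j<n. if j = i then q j h else 0)"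
      by (rule sum.cong) auto
    also have "\<dots> = q i h" using assms by (simp add: sum.delta)
    finally show "q i h = (\<Sum>j<n. (if j = i then 1 else 0) * q j h)" by simp
  qed
  show ?thesis unfolding spn_def by (rule exI[of _ "\<lambda>j. if j = i then 1 else 0"], rule X)
qed

lemma spn_mono: assumes "n \<le> n'" "spn A q n p" shows "spn A q n' p"
proof -
  obtain c where c: "\<forall>h\<in>A. p h = (\<Sum>i<n. c i * q i h)" using assms unfolding spn_def by blast
  have X: "\<forall>h\<in>A. p h = (\<Sum>i<n'. (if i < n then c i else 0) * q i h)"
  proof
    fix h assume h: "h \<in> A"
    have "(\<Sum>i<n'. (if i < n then c i else 0) * q i h) = (\<Sum>i<n. (if i < n then c i else 0) * q i h)"
      using assms(1) by (intro sum.mono_neutral_right) auto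
    also have "\<dots> = (\<Sum>i<n. c i * q i h)" by (rule sum.cong) auto
    finally show "p h = (\<Sum>i<n'. (if i < n then c i else 0) * q i h)" using c h by simp
  qed
  show ?thesis unfolding spn_def by (rule exI[of _ "\<lambda>i. if i < n then c i else 0"], rule X)
qed

lemma spn_lin: assumes "spn A q n p1" "spn A q n p2" "\<forall>h\<in>A. p h = a * p1 h + b * p2 h"
  shows "spn A q n p"
proof -
  obtain c1 where c1: "\<forall>h\<in>A. p1 h = (\<Sum>i<n. c1 i * q i h)" using assms unfolding spn_def by blast
  obtain c2 where c2: "\<forall>h\<in>A. p2 h = (\<Sum>i<n. c2 i * q i h)" using assms unfolding spn_def by blast
  have X: "\<forall>h\<in>A. p h = (\<Sum>i<n. (a * c1 i + b * c2 i) * q i h)"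
    using c1 c2 assms(3) by (simp add: sum.distrib sum_distrib_left algebra_simps)
  show ?thesis unfolding spn_def by (rule exI[of _ "\<lambda>i. a * c1 i + b * c2 i"], rule X)
qed

lemma spn_zero: "spn A q n (\<lambda>_. 0)"
  unfolding spn_def by (intro exI[of _ "\<lambda>_. 0"]) simp

lemma spn_sum: assumes "finite J" "\<forall>j\<in>J. spn A q n (P j)"
  shows "spn A q n (\<lambda>h. \<Sum>j\<in>J. a j * P j h)"
  using assms
proof (induction J rule: finite_induct)
  case empty then show ?case using spn_zero by simp
next
  case (insert x F)
  show ?case
    by (rule spn_lin[of A q n "P x" "\<lambda>h. \<Sum>j\<in>F. a j * P j h" _ "a x" 1]) (use insert in auto)
qed

lemma not_spn: assumes "n < m" "lin_indep_on G m q" "spn (carrier G) q n p"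
  shows "\<exists>h\<in>carrier G. q n h \<noteq> p h"
proof (rule ccontr)
  assume "\<not> ?thesis"
  then have eq: "\<forall>h\<in>carrier G. q n h = p h" by blast
  obtain c where c: "\<forall>h\<in>carrier G. p h = (\<Sum>i<n. c i * q i h)" using assms unfolding spn_def by blast
  define c' where "c' i = (if i < n then - c i else if i = n then 1 else 0)" for i
  have "\<forall>h\<in>carrier G. (\<Sum>i<m. c' i * q i h) = 0"
  proof
    fix h assume h: "h \<in> carrier G"
    have "(\<Sum>i<m. c' i * q i h) = (\<Sum>i<Suc n. c' i * q i h)"
      using assms(1) by (intro sum.mono_neutral_right) (auto simp: c'_def)
    also have "\<dots> = (\<Sum>i<n. c' i * q i h) + q n h" by (simp add: c'_def)
    also have "(\<Sum>i<n. c' i * q i h) = - (\<Sum>i<n. c i * q i h)"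
      by (simp add: c'_def sum_negf[symmetric])
    finally show "(\<Sum>i<m. c' i * q i h) = 0" using c eq h by simp
  qed
  then have "c' n = 0" using assms(1,2) unfolding lin_indep_on_def by blast
  then show False by (simp add: c'_def)
qed

lemma dual_basis: assumes "lin_indep_on G m q"
  shows "n \<le> m \<Longrightarrow> \<exists>g p. (\<forall>j<n. g j \<in> carrier G) \<and> (\<forall>k<n. spn (carrier G) q n (p k))
     \<and> (\<forall>k<n. \<forall>j<n. p k (g j) = (if k = j then 1 else 0))"
proof (induction n)
  case 0 then show ?case by simp
next
  case (Suc n)
  then obtain g p where g: "\<forall>j<n. g j \<in> carrier G" and p: "\<forall>k<n. spn (carrier G) q n (p k)"
    and d: "\<forall>k<n. \<forall>j<n. p k (g j) = (if k = j then 1 else 0)" by auto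
  define R where "R h = (\<Sum>j<n. q n (g j) * p j h)" for h
  have sR: "spn (carrier G) q n R" unfolding R_def[abs_def] using p by (intro spn_sum) auto
  obtain h0 where h0: "h0 \<in> carrier G" "q n h0 \<noteq> R h0"
    using not_spn[OF _ assms sR] Suc.prems by auto
  define r where "r h = q n h - R h" for h
  define \<rho> where "\<rho> = r h0"
  have \<rho>0: "\<rho> \<noteq> 0" using h0 unfolding \<rho>_def r_def by simp
  have rg: "r (g j) = 0" if j: "j < n" for j
  proof -
    have "R (g j) = (\<Sum>j'<n. q n (g j') * (if j' = j then 1 else 0))"
      unfolding R_def by (rule sum.cong) (use d j in auto)
    also have "\<dots> = (\<Sum>j'<n. if j' = j then q n (g j') else 0)" by (rule sum.cong) auto
    also have "\<dots> = q n (g j)" using j by (simp add: sum.delta)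
    finally show ?thesis unfolding r_def by simp
  qed
  have s1: "spn (carrier G) q (Suc n) (q n)" by (rule spn_q) simp
  have s2: "spn (carrier G) q (Suc n) R" by (rule spn_mono[OF _ sR]) simp
  have sr: "spn (carrier G) q (Suc n) r"
    by (rule spn_lin[OF s1 s2, of _ 1 "-1"]) (simp add: r_def)
  define g' where "g' = g(n := h0)"
  define p' where "p' k = (if k = n then (\<lambda>h. r h / \<rho>) else (\<lambda>h. p k h - p k h0 * (r h / \<rho>)))" for k
  have "\<forall>j<Suc n. g' j \<in> carrier G" using g h0 by (auto simp: g'_def less_Suc_eq)
  moreover have "\<forall>k<Suc n. spn (carrier G) q (Suc n) (p' k)"
  proof (intro allI impI)
    fix k assume k: "k < Suc n"
    show "spn (carrier G) q (Suc n) (p' k)"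
    proof (cases "k = n")
      case True
      then have e: "p' k = (\<lambda>h. r h / \<rho>)" by (simp add: p'_def)
      show ?thesis unfolding e
        by (rule spn_lin[OF sr sr, of _ "1/\<rho>" 0]) auto
    next
      case False
      then have "k < n" using k by simp
      then have sp: "spn (carrier G) q (Suc n) (p k)" using spn_mono[of n "Suc n" "carrier G" q "p k"] p by simp
      have e: "p' k = (\<lambda>h. p k h - p k h0 * (r h / \<rho>))" using False by (simp add: p'_def)
      show ?thesis unfolding e
        by (rule spn_lin[OF sp sr, of _ 1 "- p k h0 / \<rho>"]) auto
    qed
  qed
  moreover have "\<forall>k<Suc n. \<forall>j<Suc n. p' k (g' j) = (if k = j then 1 else 0)"
  proof (intro allI impI)
    fix k j assume k: "k < Suc n" and j: "j < Suc n"
    show "p' k (g' j) = (if k = j then 1 else 0)"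
    proof (cases "k = n")
      case True
      then show ?thesis
      proof (cases "j = n")
        case True
        then show ?thesis using \<open>k = n\<close> \<rho>0 by (simp add: p'_def g'_def \<rho>_def)
      next
        case False
        then have "j < n" using j by simp
        then show ?thesis using \<open>k = n\<close> rg by (simp add: p'_def g'_def)
      qed
    next
      case False
      then have kn: "k < n" using k by simp
      then show ?thesis
      proof (cases "j = n")
        case True
        then show ?thesis using False \<rho>0 by (simp add: p'_def g'_def \<rho>_def)
      next
        case False
        then have "j < n" using j by simp
        then show ?thesis using \<open>k \<noteq> n\<close> kn rg d by (simp add: p'_def g'_def)
      qed
    qed
  qed
  ultimately show ?case by blast
qed


theorem mainTheorem1:
  fixes G :: "('a, 'b) monoid_scheme" and S :: "'a set"
    and m :: nat and q :: "nat \<Rightarrow> 'a \<Rightarrow> real"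
  assumes "group G"
    and "S \<subseteq> carrier G"
    and "conj_invariant G S"
    and "generate G S = carrier G"
    and "\<forall>i<m. quasi_morphism G (q i) \<and> homogeneous G (q i)"
    and "lin_indep_on G m q"
    and "\<forall>i<m. \<exists>B. \<forall>s\<in>S. \<bar>q i s\<bar> \<le> B"
  shows "\<exists>f. qi_embedding_Zm_Cay m G S f"
proof -
  have cayI: "cay G S" using assms(1-4) by (simp add: cay_def cay_axioms_def)
  interpret cay G S by (rule cayI)
  obtain g p where g: "\<forall>j<m. g j \<in> carrier G" and sp: "\<forall>k<m. spn (carrier G) q m (p k)"
    and du: "\<forall>k<m. \<forall>j<m. p k (g j) = (if k = j then 1 else 0)"
    using dual_basis[OF assms(6), of m] by auto
  have "\<forall>k. \<exists>ck. k < m \<longrightarrow> (\<forall>h\<in>carrier G. p k h = (\<Sum>i<m. ck i * q i h))"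
    using sp unfolding spn_def by blast
  then obtain c where c: "\<And>k h. k < m \<Longrightarrow> h \<in> carrier G \<Longrightarrow> p k h = (\<Sum>i<m. c k i * q i h)"
    using choice[of "\<lambda>k ck. k < m \<longrightarrow> (\<forall>h\<in>carrier G. p k h = (\<Sum>i<m. ck i * q i h))"] by blast
  have "\<forall>i. \<exists>Di. i < m \<longrightarrow> Di \<ge> 0 \<and> (\<forall>a\<in>carrier G. \<forall>b\<in>carrier G. \<bar>q i (a \<otimes>\<^bsub>G\<^esub> b) - q i a - q i b\<bar> \<le> Di)"
  proof
    fix i
    show "\<exists>Di. i < m \<longrightarrow> Di \<ge> 0 \<and> (\<forall>a\<in>carrier G. \<forall>b\<in>carrier G. \<bar>q i (a \<otimes>\<^bsub>G\<^esub> b) - q i a - q i b\<bar> \<le> Di)"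
    proof (cases "i < m")
      case True
      then obtain D0 where "\<forall>a\<in>carrier G. \<forall>b\<in>carrier G. \<bar>q i (a \<otimes>\<^bsub>G\<^esub> b) - q i a - q i b\<bar> \<le> D0"
        using assms(5) unfolding quasi_morphism_def by blast
      then show ?thesis by (intro exI[of _ "max D0 0"]) force
    qed auto
  qed
  then obtain D where D: "\<And>i. i < m \<Longrightarrow> D i \<ge> 0 \<and> (\<forall>a\<in>carrier G. \<forall>b\<in>carrier G. \<bar>q i (a \<otimes>\<^bsub>G\<^esub> b) - q i a - q i b\<bar> \<le> D i)"
    using choice[of "\<lambda>i Di. i < m \<longrightarrow> Di \<ge> 0 \<and> (\<forall>a\<in>carrier G. \<forall>b\<in>carrier G. \<bar>q i (a \<otimes>\<^bsub>G\<^esub> b) - q i a - q i b\<bar> \<le> Di)"] by blast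
  have "\<forall>i. \<exists>Bi. i < m \<longrightarrow> Bi \<ge> 0 \<and> (\<forall>s\<in>S. \<bar>q i s\<bar> \<le> Bi)"
  proof
    fix i
    show "\<exists>Bi. i < m \<longrightarrow> Bi \<ge> 0 \<and> (\<forall>s\<in>S. \<bar>q i s\<bar> \<le> Bi)"
    proof (cases "i < m")
      case True
      then obtain B0 where "\<forall>s\<in>S. \<bar>q i s\<bar> \<le> B0" using assms(7) by blast
      then show ?thesis by (intro exI[of _ "max B0 0"]) force
    qed auto
  qed
  then obtain B where B: "\<And>i. i < m \<Longrightarrow> B i \<ge> 0 \<and> (\<forall>s\<in>S. \<bar>q i s\<bar> \<le> B i)"
    using choice[of "\<lambda>i Bi. i < m \<longrightarrow> Bi \<ge> 0 \<and> (\<forall>s\<in>S. \<bar>q i s\<bar> \<le> Bi)"] by blast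
  have "\<forall>j. \<exists>Lj. j < m \<longrightarrow> Wd (g j) Lj" using Wd_gen g by blast
  then obtain L where L: "\<And>j. j < m \<Longrightarrow> Wd (g j) (L j)"
    using choice[of "\<lambda>j Lj. j < m \<longrightarrow> Wd (g j) Lj"] by blast
  have qmI: "qm G S (q i) (D i) (B i)" if i: "i < m" for i
    unfolding qm_def qm_axioms_def using cayI D[OF i] B[OF i] assms(5) i by auto
  define f where "f x = Pw G g x m" for x
  define M1 where "M1 = (\<Sum>k<m. \<Sum>i<m. \<bar>c k i\<bar> * (B i + D i))"
  define M2 where "M2 = (\<Sum>k<m. \<Sum>i<m. \<bar>c k i\<bar> * (real m * D i))"
  define K where "K = 1 + M1 + (\<Sum>j<m. real (L j))"
  have M1: "M1 \<ge> 0" unfolding M1_def using B D by (intro sum_nonneg) (simp add: add_nonneg_nonneg)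
  have M2: "M2 \<ge> 0" unfolding M2_def using D by (intro sum_nonneg) simp
  have K1: "K \<ge> 1" unfolding K_def using M1 by (simp add: sum_nonneg)
  have fc: "f x \<in> carrier G" for x unfolding f_def using Pw_carrier g by simp
  have bounds: "l1_dist m x y / K - M2 \<le> real (cay_dist G S (f x) (f y)) \<and>
        real (cay_dist G S (f x) (f y)) \<le> K * l1_dist m x y + M2" for x y
  proof -
    define d where "d = cay_dist G S (f x) (f y)"
    define F where "F = f y \<otimes>\<^bsub>G\<^esub> inv\<^bsub>G\<^esub> (f x)"
    define z where "z j = y j - x j" for j
    have l1: "l1_dist m x y = (\<Sum>j<m. \<bar>real_of_int (z j)\<bar>)"
      unfolding l1_dist_def z_def by (rule sum.cong) auto
    have dle: "d \<le> (\<Sum>j<m. nat \<bar>y j - x j\<bar> * L j)"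
      unfolding d_def using Wd_F[of m g L y x] g L fc
      by (intro cay_dist_le) (auto simp: f_def)
    have eqs: "real (\<Sum>j<m. nat \<bar>y j - x j\<bar> * L j) = (\<Sum>j<m. \<bar>real_of_int (z j)\<bar> * real (L j))"
      unfolding of_nat_sum by (rule sum.cong) (simp_all add: z_def of_nat_nat)
    have "real d \<le> real (\<Sum>j<m. nat \<bar>y j - x j\<bar> * L j)"
      using dle by (simp only: of_nat_le_iff)
    then have "real d \<le> (\<Sum>j<m. \<bar>real_of_int (z j)\<bar> * real (L j))"
      using eqs by linarith
    also have "\<dots> \<le> (\<Sum>j<m. \<bar>real_of_int (z j)\<bar> * K)"
    proof (rule sum_mono)
      fix j assume j: "j \<in> {..<m}"
      have "real (L j) \<le> (\<Sum>j<m. real (L j))"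
        using j by (intro member_le_sum) auto
      then have "real (L j) \<le> K" unfolding K_def using M1 by simp
      then show "\<bar>real_of_int (z j)\<bar> * real (L j) \<le> \<bar>real_of_int (z j)\<bar> * K"
        by (intro mult_left_mono) auto
    qed
    also have "\<dots> = K * l1_dist m x y" unfolding l1 by (simp add: sum_distrib_left mult.commute)
    finally have up: "real d \<le> K * l1_dist m x y + M2" using M2 by simp
    have WF: "Wd F d" unfolding F_def d_def using cay_dist_Wd fc by simp
    define E where "E i = real d * (B i + D i) + real m * D i" for i
    have Ei: "\<bar>\<Sum>j<m. real_of_int (z j) * q i (g j)\<bar> \<le> E i" if i: "i < m" for i
    proof -
      have "\<bar>q i F\<bar> \<le> real d * (B i + D i)" using qm.q_Wd[OF qmI[OF i] WF] .
      moreover have "\<bar>q i F - (\<Sum>j<m. real_of_int (z j) * q i (g j))\<bar> \<le> real m * D i"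
        using qm.q_F[OF qmI[OF i], of m g y x] g unfolding F_def f_def z_def by simp
      ultimately show ?thesis unfolding E_def by linarith
    qed
    have zk: "real_of_int (z k) = (\<Sum>i<m. c k i * (\<Sum>j<m. real_of_int (z j) * q i (g j)))"
      if k: "k < m" for k
    proof -
      have "(\<Sum>i<m. c k i * (\<Sum>j<m. real_of_int (z j) * q i (g j)))
          = (\<Sum>i<m. \<Sum>j<m. c k i * (real_of_int (z j) * q i (g j)))"
        by (simp add: sum_distrib_left)
      also have "\<dots> = (\<Sum>j<m. \<Sum>i<m. c k i * (real_of_int (z j) * q i (g j)))"
        by (rule sum.swap)
      also have "\<dots> = (\<Sum>j<m. real_of_int (z j) * (\<Sum>i<m. c k i * q i (g j)))"
        by (simp add: sum_distrib_left algebra_simps)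
      also have "\<dots> = (\<Sum>j<m. real_of_int (z j) * p k (g j))"
        using c[OF k] g by (intro sum.cong) auto
      also have "\<dots> = (\<Sum>j<m. if j = k then real_of_int (z j) else 0)"
        using du k by (intro sum.cong) auto
      also have "\<dots> = real_of_int (z k)" using k by (simp add: sum.delta)
      finally show ?thesis by simp
    qed
    have zk2: "\<bar>real_of_int (z k)\<bar> \<le> (\<Sum>i<m. \<bar>c k i\<bar> * E i)" if k: "k < m" for k
    proof -
      have "\<bar>real_of_int (z k)\<bar> \<le> (\<Sum>i<m. \<bar>c k i * (\<Sum>j<m. real_of_int (z j) * q i (g j))\<bar>)"
        unfolding zk[OF k] by (rule sum_abs)
      also have "\<dots> \<le> (\<Sum>i<m. \<bar>c k i\<bar> * E i)"
        by (rule sum_mono) (auto simp: abs_mult intro: mult_left_mono Ei)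
      finally show ?thesis .
    qed
    have "l1_dist m x y \<le> (\<Sum>k<m. \<Sum>i<m. \<bar>c k i\<bar> * E i)"
      unfolding l1 using zk2 by (intro sum_mono) auto
    also have "\<dots> = real d * M1 + M2"
      unfolding E_def M1_def M2_def
      by (simp add: sum_distrib_left sum.distrib algebra_simps)
    also have "\<dots> \<le> K * real d + K * M2"
    proof -
      have "real d * M1 \<le> K * real d" unfolding K_def by (simp add: algebra_simps sum_nonneg)
      moreover have "M2 \<le> K * M2" using K1 M2 by (simp add: mult_le_cancel_right1)
      ultimately show ?thesis by simp
    qed
    finally have "l1_dist m x y \<le> K * (real d + M2)" by (simp add: algebra_simps)
    then have "l1_dist m x y / K \<le> real d + M2" using K1 by (simp add: divide_le_eq mult.commute)
    then show ?thesis using up unfolding d_def by simp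
  qed
  have "qi_embedding_Zm_Cay m G S f"
    unfolding qi_embedding_Zm_Cay_def using fc bounds K1 M2 by blast
  then show ?thesis by blast
qed

end
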